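(* Let $\mathbf{Q}\subseteq\mathbb{R}^N$ be a bounded convex set and $\phi:\mathbf{Q}\to\mathbb{R}_{\ge0}$ a density function with $0<\int_{\mathbf{Q}}\phi(\mathbf{q})\,\mathrm{d}\mathbf{q}\le\eta<\infty$. Let $\lambda:\mathbb{R}_{\ge0}\to\mathbb{R}_{\ge0}$ satisfy $\lim_{t\to\infty}\lambda(t)=0$. For a configuration $\mathbf{P}=\{\mathbf{p}_1,\dots,\mathbf{p}_n\}\subset\mathbf{Q}$ define $$H(\mathbf{P})=\frac12\sum_{i=1}^n\int_{\mathbf{Q}}h_i(\mathbf{q},\mathbf{P})\lVert\mathbf{q}-\mathbf{p}_i\rVert^2\phi(\mathbf{q})\,\mathrm{d}\mathbf{q},\qquad \hat H(t,\mathbf{P})=\frac12\sum_{i=1}^n\int_{\mathbf{Q}}h_\lambda\big(t,R_i(\mathbf{q},\mathbf{P})\big)\lVert\mathbf{q}-\mathbf{p}_i\rVert^2\phi(\mathbf{q})\,\mathrm{d}\mathbf{q},$$ where $h_i(\mathbf{q},\mathbf{P})=1$ if $\lVert\mathbf{q}-\mathbf{p}_i\rVert\le\lVert\mathbf{q}-\mathbf{p}_j\rVert$ for all $j$ and $h_i(\mathbf{q},\mathbf{P})=0$ otherwise, $R_i(\mathbf{q},\mathbf{P})=\sum_{l=1}^n\kappa(\lVert\mathbf{q}-\mathbf{p}_i\rVert-\lVert\mathbf{q}-\mathbf{p}_l\rVert)$, and $h_\lambda(t,R)=\exp\{-R/\lambda(t)\}$. Then for any fixed configuration $\mathbf{P}$,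 $$\lim_{t\to\infty}\hat H(t,\mathbf{P})=H(\mathbf{P}).$$
   Context: $\kappa$ is the Heaviside function: $\kappa(c)=1$ for $c>0$, $\kappa(c)=0$ for $c\le0$. $\lVert\cdot\rVert$ is the Euclidean norm. $H$ is the conventional Voronoi-based coverage cost written over the whole environment; $\hat H$ is the proposed time-varying coverage cost. *)

theory Defs
  imports "HOL-Analysis.Analysis"
begin

definition heaviside :: "real \<Rightarrow> real" where
  "heaviside c = (if c > 0 then 1 else 0)"

definition vor_ind :: "nat \<Rightarrow> (nat \<Rightarrow> 'a::euclidean_space) \<Rightarrow> nat \<Rightarrow> 'a \<Rightarrow> real" where
  "vor_ind n p i q = (if (\<forall>j\<in>{1..n}. norm (q - p i) \<le> norm (q - p j)) then 1 else 0)"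

definition rank_fn :: "nat \<Rightarrow> (nat \<Rightarrow> 'a::euclidean_space) \<Rightarrow> nat \<Rightarrow> 'a \<Rightarrow> real" where
  "rank_fn n p i q = (\<Sum>l=1..n. heaviside (norm (q - p i) - norm (q - p l)))"

definition h_lambda :: "(real \<Rightarrow> real) \<Rightarrow> real \<Rightarrow> real \<Rightarrow> real" where
  "h_lambda lam t R = exp (- R / lam t)"

definition cov_H :: "'a::euclidean_space set \<Rightarrow> ('a \<Rightarrow> real) \<Rightarrow> nat \<Rightarrow> (nat \<Rightarrow> 'a) \<Rightarrow> real" where
  "cov_H Q \<phi> n p = (1/2) * (\<Sum>i=1..n. integral Q (\<lambda>q. vor_ind n p i q * (norm (q - p i))\<^sup>2 * \<phi> q))"

definition cov_Hhat :: "'a::euclidean_space set \<Rightarrow> ('a \<Rightarrow> real) \<Rightarrow> (real \<Rightarrow> real) \<Rightarrow> nat \<Rightarrow> (nat \<Rightarrow> 'a) \<Rightarrow> real \<Rightarrow> real" where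
  "cov_Hhat Q \<phi> lam n p t = (1/2) * (\<Sum>i=1..n. integral Q (\<lambda>q. h_lambda lam t (rank_fn n p i q) * (norm (q - p i))\<^sup>2 * \<phi> q))"

end

theory Submission imports Defs begin

lemma rank_meas: "(\<lambda>q. rank_fn n p i q) \<in> borel_measurable borel"
  unfolding rank_fn_def heaviside_def
  by measurable

lemma vor_meas: "(\<lambda>q. vor_ind n p i q) \<in> borel_measurable borel"
  unfolding vor_ind_def
  by measurable

lemma exp_lim:
  fixes lam :: "real \<Rightarrow> real"
  assumes "\<And>t. t \<ge> 0 \<Longrightarrow> lam t > 0" "(lam \<longlongrightarrow> 0) at_top"
  shows "((\<lambda>t. exp (- 1 / lam t)) \<longlongrightarrow> 0) at_top"
proof -
  have ev: "eventually (\<lambda>t. lam t > 0) at_top"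
    unfolding eventually_at_top_linorder by (rule exI[of _ 0]) (simp add: assms(1))
  have "filterlim lam (at_right 0) at_top"
    using tendsto_imp_filterlim_at_right[OF assms(2) ev] .
  then have "filterlim (\<lambda>t. inverse (lam t)) at_top at_top"
    by (rule filterlim_compose[OF filterlim_inverse_at_top_right])
  then have "filterlim (\<lambda>t. - inverse (lam t)) at_bot at_top"
    by (simp add: filterlim_uminus_at_bot)
  then have "((\<lambda>t. exp (- inverse (lam t))) \<longlongrightarrow> 0) at_top"
    by (rule filterlim_compose[OF exp_at_bot])
  then show ?thesis by (simp add: divide_inverse)
qed

lemma pw:
  assumes L: "lam t > 0"
  shows "\<bar>h_lambda lam t (rank_fn n p i q) - vor_ind n p i q\<bar> \<le> exp (- 1 / lam t)"
proof (cases "\<forall>j\<in>{1..n}. norm (q - p i) \<le> norm (q - p j)")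
  case True
  then have "rank_fn n p i q = 0" unfolding rank_fn_def heaviside_def
    by (intro sum.neutral) auto
  then show ?thesis using True by (simp add: h_lambda_def vor_ind_def)
next
  case False
  then obtain j where j: "j \<in> {1..n}" "norm (q - p i) > norm (q - p j)" by auto
  have "heaviside (norm (q - p i) - norm (q - p j)) \<le> rank_fn n p i q"
    unfolding rank_fn_def by (rule member_le_sum[OF j(1)]) (auto simp: heaviside_def)
  then have R: "1 \<le> rank_fn n p i q" using j by (simp add: heaviside_def)
  have "- rank_fn n p i q / lam t \<le> - 1 / lam t"
    using R L by (simp add: divide_right_mono)
  then have "h_lambda lam t (rank_fn n p i q) \<le> exp (- 1 / lam t)"
    unfolding h_lambda_def by simp
  moreover have "vor_ind n p i q = 0" using False by (simp add: vor_ind_def)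
  moreover have "h_lambda lam t (rank_fn n p i q) \<ge> 0" by (simp add: h_lambda_def)
  ultimately show ?thesis by simp
qed
lemma per_i:
  fixes Q :: "'a::euclidean_space set" and \<phi> :: "'a \<Rightarrow> real"
    and lam :: "real \<Rightarrow> real"
  assumes "bounded Q" and "convex Q"
    and phi0: "\<And>q. q \<in> Q \<Longrightarrow> \<phi> q \<ge> 0"
    and phiI: "\<phi> integrable_on Q"
    and lpos: "\<And>t. t \<ge> 0 \<Longrightarrow> lam t > 0"
    and "(lam \<longlongrightarrow> 0) at_top"
  shows "((\<lambda>t. integral Q (\<lambda>q. h_lambda lam t (rank_fn n p i q) * (norm (q - p i))\<^sup>2 * \<phi> q))
     \<longlongrightarrow> integral Q (\<lambda>q. vor_ind n p i q * (norm (q - p i))\<^sup>2 * \<phi> q)) at_top"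
proof -
  have QL: "Q \<in> sets lebesgue" using measurable_convex assms(1,2) by blast
  have phiA: "\<phi> absolutely_integrable_on Q"
    using nonnegative_absolutely_integrable_1[OF phiI] phi0 by blast
  obtain B where B: "\<And>q. q \<in> Q \<Longrightarrow> (norm (q - p i))\<^sup>2 \<le> B"
  proof -
    obtain r where r: "\<And>q. q \<in> Q \<Longrightarrow> norm q \<le> r" using assms(1) bounded_iff by blast
    have "(norm (q - p i))\<^sup>2 \<le> (r + norm (p i))\<^sup>2" if "q \<in> Q" for q
    proof (rule power_mono)
      show "norm (q - p i) \<le> r + norm (p i)"
        using r[OF that] norm_triangle_ineq4[of q "p i"] by linarith
    qed simp
    then show ?thesis using that by blast
  qed
  have int: "(\<lambda>q. f q * (norm (q - p i))\<^sup>2 * \<phi> q) integrable_on Q"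
    if fm: "f \<in> borel_measurable borel" and fb: "\<And>q. \<bar>f q\<bar> \<le> 1" for f :: "'a \<Rightarrow> real"
  proof -
    have m: "(\<lambda>q. f q * (norm (q - p i))\<^sup>2) \<in> borel_measurable borel"
      using fm by measurable
    have m2: "(\<lambda>q. f q * (norm (q - p i))\<^sup>2) \<in> borel_measurable (lebesgue_on Q)"
      using measurable_comp[OF id_borel_measurable_lebesgue_on m] by (simp add: o_def)
    have "bounded ((\<lambda>q. f q * (norm (q - p i))\<^sup>2) ` Q)"
      unfolding bounded_iff
    proof (intro exI ballI)
      fix y assume "y \<in> (\<lambda>q. f q * (norm (q - p i))\<^sup>2) ` Q"
      then obtain q where q: "q \<in> Q" "y = f q * (norm (q - p i))\<^sup>2" by auto
      have "\<bar>f q\<bar> * (norm (q - p i))\<^sup>2 \<le> 1 * B"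
        by (rule mult_mono) (use fb B q in auto)
      then show "norm y \<le> B" using q by (simp add: abs_mult)
    qed
    from absolutely_integrable_bounded_measurable_product[OF bilinear_times m2 QL this phiA]
    show ?thesis using set_lebesgue_integral_eq_integral(1) by blast
  qed
  have Ih: "(\<lambda>q. h_lambda lam t (rank_fn n p i q) * (norm (q - p i))\<^sup>2 * \<phi> q) integrable_on Q"
    if "t \<ge> 0" for t
  proof (rule int)
    show "(\<lambda>q. h_lambda lam t (rank_fn n p i q)) \<in> borel_measurable borel"
      unfolding h_lambda_def using rank_meas by measurable
    fix q
    have "rank_fn n p i q \<ge> 0" unfolding rank_fn_def heaviside_def by (rule sum_nonneg) auto
    then have "- rank_fn n p i q / lam t \<le> 0" using lpos[OF that] by simp
    then show "\<bar>h_lambda lam t (rank_fn n p i q)\<bar> \<le> 1" unfolding h_lambda_def by simp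
  qed
  have Iv: "(\<lambda>q. vor_ind n p i q * (norm (q - p i))\<^sup>2 * \<phi> q) integrable_on Q"
    by (rule int) (use vor_meas in \<open>auto simp: vor_ind_def\<close>)
  have I1: "(\<lambda>q. (norm (q - p i))\<^sup>2 * \<phi> q) integrable_on Q"
    using int[of "\<lambda>_. 1"] by simp
  define C where "C = integral Q (\<lambda>q. (norm (q - p i))\<^sup>2 * \<phi> q)"
  have bnd: "norm (integral Q (\<lambda>q. h_lambda lam t (rank_fn n p i q) * (norm (q - p i))\<^sup>2 * \<phi> q)
     - integral Q (\<lambda>q. vor_ind n p i q * (norm (q - p i))\<^sup>2 * \<phi> q)) \<le> exp (- 1 / lam t) * C"
    if t0: "t \<ge> 0" for t
  proof -
    have "integral Q (\<lambda>q. h_lambda lam t (rank_fn n p i q) * (norm (q - p i))\<^sup>2 * \<phi> q)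
     - integral Q (\<lambda>q. vor_ind n p i q * (norm (q - p i))\<^sup>2 * \<phi> q)
     = integral Q (\<lambda>q. h_lambda lam t (rank_fn n p i q) * (norm (q - p i))\<^sup>2 * \<phi> q
          - vor_ind n p i q * (norm (q - p i))\<^sup>2 * \<phi> q)"
      by (rule integral_diff[symmetric, OF Ih[OF t0] Iv])
    also have "norm \<dots> \<le> integral Q (\<lambda>q. exp (- 1 / lam t) * ((norm (q - p i))\<^sup>2 * \<phi> q))"
    proof (rule integral_norm_bound_integral)
      show "(\<lambda>q. h_lambda lam t (rank_fn n p i q) * (norm (q - p i))\<^sup>2 * \<phi> q
          - vor_ind n p i q * (norm (q - p i))\<^sup>2 * \<phi> q) integrable_on Q"
        by (rule integrable_diff[OF Ih[OF t0] Iv])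
      show "(\<lambda>q. exp (- 1 / lam t) * ((norm (q - p i))\<^sup>2 * \<phi> q)) integrable_on Q"
        using integrable_on_cmult_left[OF I1] by simp
      fix q assume q: "q \<in> Q"
      have e: "h_lambda lam t (rank_fn n p i q) * (norm (q - p i))\<^sup>2 * \<phi> q
          - vor_ind n p i q * (norm (q - p i))\<^sup>2 * \<phi> q
          = (h_lambda lam t (rank_fn n p i q) - vor_ind n p i q) * ((norm (q - p i))\<^sup>2 * \<phi> q)"
        by (simp add: algebra_simps)
      have "\<bar>(h_lambda lam t (rank_fn n p i q) - vor_ind n p i q) * ((norm (q - p i))\<^sup>2 * \<phi> q)\<bar>
         = \<bar>h_lambda lam t (rank_fn n p i q) - vor_ind n p i q\<bar> * ((norm (q - p i))\<^sup>2 * \<phi> q)"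
        using phi0[OF q] by (simp add: abs_mult)
      also have "\<dots> \<le> exp (- 1 / lam t) * ((norm (q - p i))\<^sup>2 * \<phi> q)"
        by (rule mult_right_mono[OF pw[of lam t, OF lpos[OF t0]]]) (use phi0[OF q] in simp)
      finally show "norm (h_lambda lam t (rank_fn n p i q) * (norm (q - p i))\<^sup>2 * \<phi> q
          - vor_ind n p i q * (norm (q - p i))\<^sup>2 * \<phi> q) \<le> exp (- 1 / lam t) * ((norm (q - p i))\<^sup>2 * \<phi> q)"
        using e by simp
    qed
    also have "\<dots> = exp (- 1 / lam t) * C" unfolding C_def by simp
    finally show ?thesis .
  qed
  have lim0: "((\<lambda>t. exp (- 1 / lam t) * C) \<longlongrightarrow> 0) at_top"
    using tendsto_mult_left_zero[OF exp_lim[OF lpos assms(6)]] by simp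
  have "((\<lambda>t. integral Q (\<lambda>q. h_lambda lam t (rank_fn n p i q) * (norm (q - p i))\<^sup>2 * \<phi> q)
     - integral Q (\<lambda>q. vor_ind n p i q * (norm (q - p i))\<^sup>2 * \<phi> q)) \<longlongrightarrow> 0) at_top"
    by (rule tendsto_norm_zero_cancel, rule tendsto_sandwich[OF _ _ tendsto_const lim0])
       (use bnd in \<open>auto simp: eventually_at_top_linorder intro!: exI[of _ 0]\<close>)
  then show ?thesis by (simp add: LIM_zero_iff)
qed
theorem lemma2:
  fixes Q :: "'a::euclidean_space set" and \<phi> :: "'a \<Rightarrow> real"
    and lam :: "real \<Rightarrow> real" and \<eta> :: real
    and n :: nat and p :: "nat \<Rightarrow> 'a"
  assumes "bounded Q" and "convex Q"
    and "\<And>q. q \<in> Q \<Longrightarrow> \<phi> q \<ge> 0"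
    and "\<phi> integrable_on Q"
    and "0 < integral Q \<phi>" and "integral Q \<phi> \<le> \<eta>"
    and "\<And>t. t \<ge> 0 \<Longrightarrow> lam t > 0"
    and "(lam \<longlongrightarrow> 0) at_top"
    and "\<And>i. i \<in> {1..n} \<Longrightarrow> p i \<in> Q"
  shows "((\<lambda>t. cov_Hhat Q \<phi> lam n p t) \<longlongrightarrow> cov_H Q \<phi> n p) at_top"
  unfolding cov_Hhat_def cov_H_def
  by (intro tendsto_mult_left tendsto_sum per_i[OF assms(1-4,7,8)])

end
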